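(* Let $q\in(0,1]$. Then $\omega(R(SO_q(3)))=q^{-4}$.
   Context: $R(SO_q(3))$ is the fusion algebra with irreducible objects $I=\mathbb{Z}_+$, unit $0$, trivial involution, product $m\cdot n=\sum_{k=|m-n|}^{m+n}k$, and dimension $d(n)=[2n+1]_q$, where $[x]_q=\frac{q^{-x}-q^x}{q^{-1}-q}$ for $0<q<1$ and $[x]_1=x$. For $A\subseteq I$, $|A|=\sum_{\beta\in A}d(\beta)^2$. A finite generating set is a finite $X\subseteq I$ such that every $\beta\in I$ has nonzero coefficient in some product $x_1\cdots x_n$, $x_i\in X$; $\ell_X(0)=0$, otherwise $\ell_X(\beta)$ is the least such $n\ge1$; $B_X(n)=\{\beta:\ell_X(\beta)\le n\}$; $\omega_X=\lim_n|B_X(n)|^{1/n}$ (exists) and $\omega=\inf_X\omega_X$ over finite generating sets. *)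

theory Defs
  imports Complex_Main
begin

text \<open>Fusion algebra R(SO_q(3)): irreducibles are naturals, unit 0,
  m * n = sum_{k=|m-n|}^{m+n} k (all coefficients 0 or 1).\<close>

definition qnum :: "real \<Rightarrow> real \<Rightarrow> real" where
  "qnum q x = (if q = 1 then x else (q powr (-x) - q powr x) / (q powr (-1) - q))"

definition dimq :: "real \<Rightarrow> nat \<Rightarrow> real" where
  "dimq q n = qnum q (real (2 * n + 1))"

definition fus :: "nat \<Rightarrow> nat \<Rightarrow> nat set" where
  "fus m n = {k. (if m \<le> n then n - m else m - n) \<le> k \<and> k \<le> m + n}"

text \<open>Support (set of irreducibles with nonzero coefficient) of the product
  x1 * ... * xn; coefficients are nonnegative, so no cancellation occurs.\<close>
fun prod_supp :: "nat list \<Rightarrow> nat set" where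
  "prod_supp [] = {0}"
| "prod_supp (x # xs) = (\<Union>k\<in>prod_supp xs. fus x k)"

definition generating :: "nat set \<Rightarrow> bool" where
  "generating X \<longleftrightarrow> finite X \<and>
     (\<forall>\<beta>::nat. \<exists>xs. xs \<noteq> [] \<and> set xs \<subseteq> X \<and> \<beta> \<in> prod_supp xs)"

definition word_len :: "nat set \<Rightarrow> nat \<Rightarrow> nat" where
  "word_len X \<beta> = (if \<beta> = 0 then 0 else
     (LEAST n. 1 \<le> n \<and> (\<exists>xs. length xs = n \<and> set xs \<subseteq> X \<and> \<beta> \<in> prod_supp xs)))"

definition ball_X :: "nat set \<Rightarrow> nat \<Rightarrow> nat set" where
  "ball_X X n = {\<beta>. word_len X \<beta> \<le> n}"

definition size_q :: "real \<Rightarrow> nat set \<Rightarrow> real" where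
  "size_q q A = (\<Sum>\<beta>\<in>A. (dimq q \<beta>)^2)"

definition omega_X :: "real \<Rightarrow> nat set \<Rightarrow> real" where
  "omega_X q X = lim (\<lambda>n. size_q q (ball_X X n) powr (1 / real n))"

definition omega :: "real \<Rightarrow> real" where
  "omega q = (INF X\<in>{X. generating X}. omega_X q X)"

end

theory Submission
  imports Defs
begin

lemma prod_supp_le: "\<beta> \<in> prod_supp xs \<Longrightarrow> \<beta> \<le> sum_list xs"
proof (induction xs arbitrary: \<beta>)
  case Nil then show ?case by simp
next
  case (Cons x xs)
  then obtain k where k: "k \<in> prod_supp xs" "\<beta> \<in> fus x k" by auto
  then have "\<beta> \<le> x + k" by (simp add: fus_def)
  with Cons.IH[OF k(1)] show ?case by simp
qed

lemma sum_list_le_Max: "finite X \<Longrightarrow> set xs \<subseteq> X \<Longrightarrow> sum_list xs \<le> length xs * Max X"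
proof (induction xs)
  case Nil then show ?case by simp
next
  case (Cons x xs)
  then have "x \<le> Max X" by (simp add: Max_ge)
  moreover have "sum_list xs \<le> length xs * Max X" using Cons by simp
  ultimately show ?case by simp
qed

lemma rep_in: "n * M \<in> prod_supp (replicate n M)"
proof (induction n)
  case 0 then show ?case by simp
next
  case (Suc n)
  have "Suc n * M \<in> fus M (n * M)" unfolding fus_def by auto
  with Suc show ?case by auto
qed

lemma gen_facts:
  assumes gen: "generating X"
  shows "finite X" "X \<noteq> {}" "1 \<le> Max X"
proof -
  show fX: "finite X" using gen by (simp add: generating_def)
  from gen obtain xs where xs: "xs \<noteq> []" "set xs \<subseteq> X" "1 \<in> prod_supp xs"
    unfolding generating_def by blast
  show "X \<noteq> {}" using xs by (cases xs) auto
  have "1 \<le> sum_list xs" using prod_supp_le[OF xs(3)] .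
  also have "\<dots> \<le> length xs * Max X" using sum_list_le_Max[OF fX xs(2)] .
  finally show "1 \<le> Max X" by (cases "Max X") auto
qed

lemma ball_sub:
  assumes gen: "generating X"
  shows "ball_X X n \<subseteq> {..n * Max X}"
proof
  fix \<beta> assume b: "\<beta> \<in> ball_X X n"
  have fX: "finite X" using gen_facts[OF gen] by simp
  show "\<beta> \<in> {..n * Max X}"
  proof (cases "\<beta> = 0")
    case True then show ?thesis by simp
  next
    case False
    from gen obtain xs where xs: "xs \<noteq> []" "set xs \<subseteq> X" "\<beta> \<in> prod_supp xs"
      unfolding generating_def by blast
    let ?P = "\<lambda>n. 1 \<le> n \<and> (\<exists>xs. length xs = n \<and> set xs \<subseteq> X \<and> \<beta> \<in> prod_supp xs)"
    have ex: "?P (length xs)" using xs by (intro conjI exI[of _ xs]) (auto simp: Suc_le_eq)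
    have wl: "word_len X \<beta> = (LEAST n. ?P n)" using False by (simp add: word_len_def)
    from LeastI[of ?P, OF ex] obtain ys where ys: "length ys = word_len X \<beta>" "set ys \<subseteq> X" "\<beta> \<in> prod_supp ys"
      unfolding wl by blast
    have "word_len X \<beta> \<le> n" using b by (simp add: ball_X_def)
    have "\<beta> \<le> sum_list ys" using prod_supp_le[OF ys(3)] .
    also have "\<dots> \<le> length ys * Max X" using sum_list_le_Max[OF fX ys(2)] .
    also have "\<dots> \<le> n * Max X" using ys(1) \<open>word_len X \<beta> \<le> n\<close> by simp
    finally show ?thesis by simp
  qed
qed

lemma top_in:
  assumes gen: "generating X"
  shows "n * Max X \<in> ball_X X n"
proof (cases "n * Max X = 0")
  case True then show ?thesis by (simp add: ball_X_def word_len_def)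
next
  case False
  then have n1: "1 \<le> n" by simp
  have MX: "Max X \<in> X" using gen_facts[OF gen] by simp
  let ?P = "\<lambda>n'. 1 \<le> n' \<and> (\<exists>xs. length xs = n' \<and> set xs \<subseteq> X \<and> n * Max X \<in> prod_supp xs)"
  have "?P n" using n1 MX rep_in[of n "Max X"]
    by (intro conjI exI[of _ "replicate n (Max X)"]) auto
  then have "(LEAST n. ?P n) \<le> n" by (rule Least_le)
  then show ?thesis using False by (simp add: ball_X_def word_len_def)
qed

lemma alg_aux:
  fixes a q :: real
  assumes "0 < a" "0 < q" "q*q \<noteq> 1"
  shows "(1/(a*q) - a*q)/(1/q - q) = (1/a) * ((1 - a*a*q*q)/(1 - q*q))"
proof -
  have d: "1 - q*q \<noteq> 0" using assms(3) by simp
  have "1/q - q = (1 - q*q)/q" using assms(2) by (simp add: field_simps)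
  moreover have "1/(a*q) - a*q = (1 - a*a*q*q)/(a*q)" using assms(1,2) by (simp add: field_simps)
  ultimately show ?thesis using assms(1,2) d by (simp add: field_simps)
qed

lemma dimq_formula:
  assumes "0 < q" "q \<le> 1"
  shows "dimq q k = (1/q)^(2*k) * (\<Sum>i<2*k+1. (q^2)^i)"
proof (cases "q = 1")
  case True then show ?thesis by (simp add: dimq_def qnum_def sum_gp_strict)
next
  case False
  then have q1: "q < 1" using assms by simp
  have qq: "q*q < 1" using q1 assms mult_strict_mono[of q 1 q 1] by simp
  then have q2: "q^2 \<noteq> 1" by (simp add: power2_eq_square)
  define a where "a = q^(2*k)"
  have a0: "0 < a" using assms a_def by simp
  have b: "q powr (real (2*k+1)) = a*q"
  proof -
    have "q powr (real (2*k+1)) = q^(2*k+1)" by (rule powr_realpow[OF assms(1)])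
    then show ?thesis by (simp add: a_def mult.commute)
  qed
  have a: "q powr (- real (2*k+1)) = 1 / (a*q)"
    using powr_minus[of q "real (2*k+1)"] b by (simp add: inverse_eq_divide)
  have c: "q powr (-1) = 1/q" using assms by (simp add: powr_neg_one)
  have "dimq q k = (1/(a*q) - a*q) / (1/q - q)"
    using False a b c by (simp add: dimq_def qnum_def)
  also have "\<dots> = (1/a) * ((1 - a*a*q*q)/(1 - q*q))"
    using alg_aux[OF a0 assms(1)] qq by simp
  also have "(1/a) = (1/q)^(2*k)" by (simp add: a_def power_one_over)
  also have "1 - a*a*q*q = 1 - (q^2)^(2*k+1)"
  proof -
    have "(q^2)^(2*k+1) = q^(2*k) * q^(2*k) * q * q"
      by (simp add: power_mult[symmetric] power_add[symmetric] algebra_simps)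
    then show ?thesis by (simp add: a_def)
  qed
  also have "1 - q*q = 1 - q^2" by (simp add: power2_eq_square)
  also have "(1 - (q^2)^(2*k+1)) / (1 - q^2) = (\<Sum>i<2*k+1. (q^2)^i)"
    unfolding sum_gp_strict using q2 by simp
  finally show ?thesis .
qed

lemma dimq_bounds:
  assumes "0 < q" "q \<le> 1"
  shows "(1/q)^(2*k) \<le> dimq q k" "dimq q k \<le> real (2*k+1) * (1/q)^(2*k)"
proof -
  let ?s = "\<Sum>i<2*k+1. (q^2)^i"
  have le1: "(q^2)^i \<le> 1" for i using assms by (simp add: power_le_one)
  have "(q^2)^0 \<le> ?s" by (rule member_le_sum) (use assms in auto)
  then have s1: "1 \<le> ?s" by simp
  have s2: "?s \<le> real (2*k+1)"
    using sum_bounded_above[of "{..<2*k+1}" "\<lambda>i. (q^2)^i" 1] le1 by simp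
  have p: "0 < (1/q)^(2*k)" using assms by simp
  show "(1/q)^(2*k) \<le> dimq q k" unfolding dimq_formula[OF assms]
    using mult_left_mono[OF s1 less_imp_le[OF p]] by simp
  show "dimq q k \<le> real (2*k+1) * (1/q)^(2*k)" unfolding dimq_formula[OF assms]
    using mult_left_mono[OF s2 less_imp_le[OF p]] by (simp add: mult.commute)
qed

lemma dimq_sq_bounds:
  assumes "0 < q" "q \<le> 1"
  shows "(1/q)^(4*k) \<le> (dimq q k)^2" "(dimq q k)^2 \<le> real (2*k+1)^2 * (1/q)^(4*k)"
proof -
  have e: "((1/q)^(2*k))^2 = (1/q)^(4*k)" by (simp add: power_mult[symmetric])
  have p: "0 \<le> (1/q)^(2*k)" using assms by simp
  show "(1/q)^(4*k) \<le> (dimq q k)^2" using power_mono[OF dimq_bounds(1)[OF assms, of k] p, of 2] e by simp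
  have "(dimq q k)^2 \<le> (real (2*k+1) * (1/q)^(2*k))^2"
    using p dimq_bounds(1)[OF assms, of k] by (intro power_mono[OF dimq_bounds(2)[OF assms, of k]]) linarith
  also have "\<dots> = real (2*k+1)^2 * (1/q)^(4*k)" using e by (simp add: power_mult_distrib)
  finally show "(dimq q k)^2 \<le> real (2*k+1)^2 * (1/q)^(4*k)" .
qed

lemma size_bounds:
  assumes "0 < q" "q \<le> 1" and gen: "generating X"
  shows "(1/q)^(4*(n*Max X)) \<le> size_q q (ball_X X n)"
        "size_q q (ball_X X n) \<le> real (n*Max X+1) * (real (2*(n*Max X)+1)^2 * (1/q)^(4*(n*Max X)))"
proof -
  let ?N = "n * Max X"
  have fin: "finite (ball_X X n)" using ball_sub[OF gen] finite_subset by blast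
  have "(dimq q ?N)^2 \<le> size_q q (ball_X X n)" unfolding size_q_def
    by (rule member_le_sum[OF top_in[OF gen] _ fin]) simp
  then show "(1/q)^(4*?N) \<le> size_q q (ball_X X n)" using dimq_sq_bounds(1)[OF assms(1,2), of ?N] by linarith
  have "size_q q (ball_X X n) \<le> (\<Sum>k\<in>{..?N}. (dimq q k)^2)" unfolding size_q_def
    by (rule sum_mono2[OF _ ball_sub[OF gen]]) auto
  also have "\<dots> \<le> real (card {..?N}) * (real (2*?N+1)^2 * (1/q)^(4*?N))"
  proof (rule sum_bounded_above)
    fix k assume "k \<in> {..?N}"
    then have kN: "k \<le> ?N" by simp
    have "(dimq q k)^2 \<le> real (2*k+1)^2 * (1/q)^(4*k)" by (rule dimq_sq_bounds(2)[OF assms(1,2)])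
    also have "\<dots> \<le> real (2*?N+1)^2 * (1/q)^(4*?N)"
    proof (rule mult_mono)
      show "real (2*k+1)^2 \<le> real (2*?N+1)^2" 
      proof (rule power_mono)
        show "real (2*k+1) \<le> real (2*?N+1)" using kN by (subst of_nat_le_iff) linarith
      qed (rule of_nat_0_le_iff)
      have "1 \<le> 1/q" using assms by simp
      then show "(1/q)^(4*k) \<le> (1/q)^(4*?N)" using kN by (intro power_increasing) auto
    qed (use assms in auto)
    finally show "(dimq q k)^2 \<le> real (2*?N+1)^2 * (1/q)^(4*?N)" .
  qed
  finally show "size_q q (ball_X X n) \<le> real (?N+1) * (real (2*?N+1)^2 * (1/q)^(4*?N))" by simp
qed


lemma omega_X_val:
  assumes q: "0 < q" "q \<le> 1" and gen: "generating X"
  shows "omega_X q X = (1/q)^(4*Max X)"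
proof -
  define M where "M = Max X"
  define r where "r = 1/q"
  define S where "S n = size_q q (ball_X X n)" for n
  have M1: "1 \<le> M" using gen_facts[OF gen] M_def by simp
  have r1: "1 \<le> r" using q r_def by simp
  have lo: "r^(4*(n*M)) \<le> S n" for n using size_bounds(1)[OF q gen, of n] unfolding S_def M_def r_def .
  have hi: "S n \<le> real (n*M+1) * (real (2*(n*M)+1)^2 * r^(4*(n*M)))" for n
    using size_bounds(2)[OF q gen, of n] unfolding S_def M_def r_def .
  have rp: "r^(4*(n*M)) = (r^(4*M))^n" for n
  proof -
    have "4*(n*M) = 4*M*n" by simp
    then show ?thesis by (simp only: power_mult)
  qed
  have Spos: "0 < S n" for n
  proof -
    have "0 < r^(4*(n*M))" using r1 by simp
    then show ?thesis using lo[of n] by linarith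
  qed
  let ?c = "r^(4*M)"
  have lower: "?c \<le> root n (S n)" if "1 \<le> n" for n
  proof -
    have "?c = root n (r^(4*(n*M)))" unfolding rp using that r1 by (simp add: real_root_pos2)
    also have "\<dots> \<le> root n (S n)" using that lo[of n] by (simp add: real_root_le_iff)
    finally show ?thesis .
  qed
  define K where "K = 18 * real M ^ 3"
  have Kpos: "0 < K" using M1 K_def by simp
  have upper: "root n (S n) \<le> root n K * root n (real n) ^ 3 * ?c" if "1 \<le> n" for n
  proof -
    define a where "a = real n * real M"
    have a1: "1 \<le> a" proof -
      have "1 \<le> n * M" using that M1 by (simp add: one_le_mult_iff)
      then have "1 \<le> real (n * M)" by (simp only: of_nat_le_iff[symmetric] of_nat_1)
      then show ?thesis unfolding a_def by simp
    qed
    have P: "real (n*M+1) * real (2*(n*M)+1)^2 \<le> K * real n ^ 3"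
    proof -
      have e: "real (n*M+1) * real (2*(n*M)+1)^2 = (a+1) * (2*a+1)^2" by (simp add: a_def add.commute)
      have "(a+1) * (2*a+1)^2 \<le> (2*a) * (3*a)^2"
        using a1 by (intro mult_mono power_mono) auto
      also have "\<dots> = K * real n ^ 3" by (simp add: a_def K_def power_mult_distrib power3_eq_cube power2_eq_square)
      finally show ?thesis using e by simp
    qed
    have "root n (S n) \<le> root n (real (n*M+1) * (real (2*(n*M)+1)^2 * r^(4*(n*M))))"
      using that hi[of n] by (simp add: real_root_le_iff)
    also have "\<dots> \<le> root n (K * real n ^ 3 * r^(4*(n*M)))"
    proof -
      have n0: "0 < n" using that by simp
      have R0: "0 \<le> r^(4*(n*M))" using r1 by simp
      have "real (n*M+1) * (real (2*(n*M)+1)^2 * r^(4*(n*M))) = (real (n*M+1) * real (2*(n*M)+1)^2) * r^(4*(n*M))"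
        by (simp only: mult.assoc)
      also have "\<dots> \<le> K * real n ^ 3 * r^(4*(n*M))" by (rule mult_right_mono[OF P R0])
      finally show ?thesis by (simp only: real_root_le_iff[OF n0])
    qed
    also have "\<dots> = root n K * root n (real n) ^ 3 * ?c"
    proof -
      have n0: "0 < n" using that by simp
      have c0: "0 \<le> ?c" using r1 by simp
      show ?thesis unfolding rp real_root_mult real_root_pos2[OF n0 c0] real_root_power[OF n0, of "real n" 3] ..
    qed
    finally show ?thesis .
  qed
  have lim_up: "(\<lambda>n. root n K * root n (real n) ^ 3 * ?c) \<longlonglongrightarrow> 1 * 1 ^ 3 * ?c"
    by (intro tendsto_intros LIMSEQ_root_const Kpos LIMSEQ_root)
  have ev1: "eventually (\<lambda>n. 1 \<le> n) sequentially" by (rule eventually_ge_at_top)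
  have conv: "(\<lambda>n. root n (S n)) \<longlonglongrightarrow> ?c"
  proof (rule tendsto_sandwich[of "\<lambda>_. ?c" _ _ "\<lambda>n. root n K * root n (real n) ^ 3 * ?c"])
    show "eventually (\<lambda>n. ?c \<le> root n (S n)) sequentially" using ev1 by eventually_elim (rule lower)
    show "eventually (\<lambda>n. root n (S n) \<le> root n K * root n (real n) ^ 3 * ?c) sequentially"
      using ev1 by eventually_elim (rule upper)
  next
    show "(\<lambda>_. ?c) \<longlonglongrightarrow> ?c" by (rule tendsto_const)
    show "(\<lambda>n. root n K * root n (real n) ^ 3 * ?c) \<longlonglongrightarrow> ?c" using lim_up by simp
  qed
  have evq: "eventually (\<lambda>n. root n (S n) = S n powr (1 / real n)) sequentially"
    using ev1 by eventually_elim (use Spos in \<open>simp add: root_powr_inverse less_imp_le\<close>)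
  have "(\<lambda>n. S n powr (1 / real n)) \<longlonglongrightarrow> ?c"
    using conv tendsto_cong[OF evq, of ?c] by simp
  then show ?thesis unfolding omega_X_def S_def M_def r_def by (rule limI)
qed


lemma gen_one: "generating {1}"
  unfolding generating_def
proof (intro conjI allI)
  fix \<beta> :: nat
  show "\<exists>xs. xs \<noteq> [] \<and> set xs \<subseteq> {1} \<and> \<beta> \<in> prod_supp xs"
  proof (cases "\<beta> = 0")
    case True
    have "0 \<in> prod_supp [1,1]" by (auto simp: fus_def)
    then show ?thesis using True by (intro exI[of _ "[1,1]"]) auto
  next
    case False
    then show ?thesis using rep_in[of \<beta> 1] by (intro exI[of _ "replicate \<beta> 1"]) auto
  qed
qed simp

theorem proposition5p4:
  fixes q :: real
  assumes "0 < q" and "q \<le> 1"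
  shows "omega q = q powr (-4)"
proof -
  have q: "0 < q" "q \<le> 1" by fact+
  have r1: "1 \<le> 1/q" using q by simp
  have val1: "omega_X q {1} = (1/q)^4" using omega_X_val[OF q gen_one] by simp
  have ge: "(1/q)^4 \<le> omega_X q X" if "X \<in> {X. generating X}" for X
  proof -
    have g: "generating X" using that by simp
    have "(1/q)^4 \<le> (1/q)^(4*Max X)" using gen_facts(3)[OF g] r1 by (intro power_increasing) auto
    then show ?thesis using omega_X_val[OF q g] by simp
  qed
  have "omega q = (1/q)^4" unfolding omega_def
  proof (rule antisym)
    show "(INF X\<in>{X. generating X}. omega_X q X) \<le> (1/q)^4"
    proof -
      have "bdd_below (omega_X q ` {X. generating X})"
        unfolding bdd_below_def using ge by blast
      then show ?thesis using cINF_lower[of "omega_X q" "{X. generating X}" "{1}"] gen_one val1 by simp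
    qed
    show "(1/q)^4 \<le> (INF X\<in>{X. generating X}. omega_X q X)"
      by (rule cINF_greatest) (use gen_one ge in auto)
  qed
  also have "\<dots> = q powr (-4)"
  proof -
    have "q powr (-4) = inverse (q powr 4)" by (rule powr_minus)
    also have "q powr 4 = q ^ 4" using q by (simp add: powr_numeral)
    finally show ?thesis by (simp add: power_one_over inverse_eq_divide)
  qed
  finally show ?thesis .
qed

end
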